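(* Let $(\mathcal D,T)$ be a finite basic quasi-schemoid, $(\mathcal C,S)$ a finite quasi-schemoid whose underlying category is a groupoid, and $\phi:(\mathcal C,S)\to(\mathcal D,T)$ an admissible morphism. Then the $\mathbb K$-linear map $\mathbb K(\phi):\mathbb K(\mathcal C,S)\to\mathbb K(\mathcal D,T)$ defined by $\mathbb K(\phi)(s_\pi)=n^\phi_\pi\, s_{\phi(\pi)}$ for $\pi\in S$ is an algebra homomorphism.
   Context: Write $s(f),t(f)$ for source and target. A quasi-schemoid is a pair $(\mathcal C,S)$ with $\mathcal C$ a small category and $S$ a partition of $mor(\mathcal C)$ into nonempty blocks such that for all $\sigma,\tau,\mu\in S$ and $f,g\in\mu$ the sets $\{(a,b)\in\sigma\times\tau: s(a)=t(b), a\circ b=f\}$ and the analogous set for $g$ have equal cardinality, denoted $p^\mu_{\sigma\tau}$. It is finite if $mor(\mathcal C)$ is finite; unital if every block meeting $\{1_x\}$ is contained in it; basic if unital and $\mathcal C$ is a groupoid. $\mathbb K$ is a commutative ring with unit. The category algebra $\mathbb K\mathcal C$ is the free $\mathbb K$-module on $mor(\mathcal C)$ with product $a\cdot b=a\circ b$ if $s(a)=t(b)$ and $0$ otherwise; $s_\sigma=\sum_{f\in\sigma}f$, and the schemoid algebra $\mathbb K(\mathcal C,S)$ is the subalgebra of $\mathbb K\mathcal C$ spanned (freely) by the $s_\sigma$, $\sigma\in S$. A morphism of quasi-schemoids $\phi$ is a functor such that each $\phi(\sigma)$ lies in a unique block of the target, also denoted $\phi(\sigma)$; it is admissible if for every $x\in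 ob(\mathcal C)$, $\sigma\in S$ and $g\in\phi(\sigma)$ with $t(g)=\phi(x)$ there exists $f\in\sigma$ with $t(f)=x$ and $\phi(f)=g$. Under the hypotheses, for each $\sigma\in S$ there is a positive integer $n^\phi_\sigma$ with $\#(\phi^{-1}(g)\cap\{f\in\sigma:t(f)=x\})=n^\phi_\sigma$ for all $x$ and all $g\in\phi(\sigma)$ with $t(g)=\phi(x)$. *)

theory Defs
  imports Main
begin

record ('o, 'a) cat =
  Ob :: "'o set"
  Mor :: "'a set"
  src :: "'a \<Rightarrow> 'o"
  tgt :: "'a \<Rightarrow> 'o"
  comp :: "'a \<Rightarrow> 'a \<Rightarrow> 'a"
  ident :: "'o \<Rightarrow> 'a"

definition category :: "('o, 'a) cat \<Rightarrow> bool" where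
  "category C \<longleftrightarrow>
     (\<forall>f\<in>Mor C. src C f \<in> Ob C \<and> tgt C f \<in> Ob C) \<and>
     (\<forall>x\<in>Ob C. ident C x \<in> Mor C \<and> src C (ident C x) = x \<and> tgt C (ident C x) = x) \<and>
     (\<forall>f\<in>Mor C. \<forall>g\<in>Mor C. src C f = tgt C g \<longrightarrow>
        comp C f g \<in> Mor C \<and> src C (comp C f g) = src C g \<and> tgt C (comp C f g) = tgt C f) \<and>
     (\<forall>f\<in>Mor C. \<forall>g\<in>Mor C. \<forall>h\<in>Mor C. src C f = tgt C g \<longrightarrow> src C g = tgt C h \<longrightarrow>
        comp C (comp C f g) h = comp C f (comp C g h)) \<and>
     (\<forall>f\<in>Mor C. comp C (ident C (tgt C f)) f = f \<and> comp C f (ident C (src C f)) = f)"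

definition groupoid :: "('o, 'a) cat \<Rightarrow> bool" where
  "groupoid C \<longleftrightarrow> category C \<and>
     (\<forall>f\<in>Mor C. \<exists>g\<in>Mor C. src C g = tgt C f \<and> tgt C g = src C f \<and>
        comp C g f = ident C (src C f) \<and> comp C f g = ident C (tgt C f))"

definition factorizations :: "('o, 'a) cat \<Rightarrow> 'a set \<Rightarrow> 'a set \<Rightarrow> 'a \<Rightarrow> ('a \<times> 'a) set" where
  "factorizations C \<sigma> \<tau> f = {(a, b). a \<in> \<sigma> \<and> b \<in> \<tau> \<and> src C a = tgt C b \<and> comp C a b = f}"

definition quasi_schemoid :: "('o, 'a) cat \<Rightarrow> 'a set set \<Rightarrow> bool" where
  "quasi_schemoid C S \<longleftrightarrow> category C \<and>
     (\<forall>\<sigma>\<in>S. \<sigma> \<noteq> {} \<and> \<sigma> \<subseteq> Mor C) \<and> \<Union>S = Mor C \<and>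
     (\<forall>\<sigma>\<in>S. \<forall>\<tau>\<in>S. \<sigma> \<noteq> \<tau> \<longrightarrow> \<sigma> \<inter> \<tau> = {}) \<and>
     (\<forall>\<sigma>\<in>S. \<forall>\<tau>\<in>S. \<forall>\<mu>\<in>S. \<forall>f\<in>\<mu>. \<forall>g\<in>\<mu>.
        card (factorizations C \<sigma> \<tau> f) = card (factorizations C \<sigma> \<tau> g))"

definition finite_qs :: "('o, 'a) cat \<Rightarrow> 'a set set \<Rightarrow> bool" where
  "finite_qs C S \<longleftrightarrow> quasi_schemoid C S \<and> finite (Mor C)"

definition unital_qs :: "('o, 'a) cat \<Rightarrow> 'a set set \<Rightarrow> bool" where
  "unital_qs C S \<longleftrightarrow> quasi_schemoid C S \<and>
     (\<forall>\<sigma>\<in>S. \<sigma> \<inter> ident C ` Ob C \<noteq> {} \<longrightarrow> \<sigma> \<subseteq> ident C ` Ob C)"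

definition basic_qs :: "('o, 'a) cat \<Rightarrow> 'a set set \<Rightarrow> bool" where
  "basic_qs C S \<longleftrightarrow> unital_qs C S \<and> groupoid C"

definition qs_morphism ::
  "('o, 'a) cat \<Rightarrow> 'a set set \<Rightarrow> ('p, 'b) cat \<Rightarrow> 'b set set \<Rightarrow> ('o \<Rightarrow> 'p) \<Rightarrow> ('a \<Rightarrow> 'b) \<Rightarrow> bool" where
  "qs_morphism C S D T po pm \<longleftrightarrow> quasi_schemoid C S \<and> quasi_schemoid D T \<and>
     (\<forall>x\<in>Ob C. po x \<in> Ob D) \<and>
     (\<forall>f\<in>Mor C. pm f \<in> Mor D \<and> src D (pm f) = po (src C f) \<and> tgt D (pm f) = po (tgt C f)) \<and>
     (\<forall>f\<in>Mor C. \<forall>g\<in>Mor C. src C f = tgt C g \<longrightarrow> pm (comp C f g) = comp D (pm f) (pm g)) \<and>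
     (\<forall>x\<in>Ob C. pm (ident C x) = ident D (po x)) \<and>
     (\<forall>\<sigma>\<in>S. \<exists>\<tau>\<in>T. pm ` \<sigma> \<subseteq> \<tau>)"

definition img_block :: "'b set set \<Rightarrow> ('a \<Rightarrow> 'b) \<Rightarrow> 'a set \<Rightarrow> 'b set" where
  "img_block T pm \<sigma> = (THE \<tau>. \<tau> \<in> T \<and> pm ` \<sigma> \<subseteq> \<tau>)"

definition admissible ::
  "('o, 'a) cat \<Rightarrow> 'a set set \<Rightarrow> ('p, 'b) cat \<Rightarrow> 'b set set \<Rightarrow> ('o \<Rightarrow> 'p) \<Rightarrow> ('a \<Rightarrow> 'b) \<Rightarrow> bool" where
  "admissible C S D T po pm \<longleftrightarrow> qs_morphism C S D T po pm \<and>
     (\<forall>x\<in>Ob C. \<forall>\<sigma>\<in>S. \<forall>g\<in>img_block T pm \<sigma>. tgt D g = po x \<longrightarrow>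
        (\<exists>f\<in>\<sigma>. tgt C f = x \<and> pm f = g))"

text \<open>n^phi_sigma: the common cardinality, evaluated at x = t(f0), g = phi(f0) for a chosen f0 in sigma.\<close>
definition nphi :: "('o, 'a) cat \<Rightarrow> ('a \<Rightarrow> 'b) \<Rightarrow> 'a set \<Rightarrow> nat" where
  "nphi C pm \<sigma> = (let f0 = (SOME f. f \<in> \<sigma>) in
     card {f \<in> \<sigma>. tgt C f = tgt C f0 \<and> pm f = pm f0})"

text \<open>Category algebra KC: elements are functions mor(C) -> K (zero outside Mor C);
  the product is the convolution given by composition.\<close>
definition cat_mult :: "('o, 'a) cat \<Rightarrow> ('a \<Rightarrow> 'k::comm_ring_1) \<Rightarrow> ('a \<Rightarrow> 'k) \<Rightarrow> ('a \<Rightarrow> 'k)" where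
  "cat_mult C u v = (\<lambda>h. \<Sum>(a, b) \<in> factorizations C (Mor C) (Mor C) h. u a * v b)"

definition sblock :: "'a set \<Rightarrow> 'a \<Rightarrow> 'k::comm_ring_1" where
  "sblock \<sigma> = (\<lambda>f. if f \<in> \<sigma> then 1 else 0)"

definition schemoid_alg :: "'a set set \<Rightarrow> ('a \<Rightarrow> 'k::comm_ring_1) set" where
  "schemoid_alg S = {u. \<exists>c. u = (\<lambda>h. \<Sum>\<sigma>\<in>S. c \<sigma> * sblock \<sigma> h)}"

text \<open>K(phi): the K-linear map with s_pi |-> n^phi_pi s_phi(pi). An element of K(C,S) is
  constant on each block, its coefficient at s_pi being its value at any element of pi.\<close>
definition Kphi ::
  "('o, 'a) cat \<Rightarrow> 'a set set \<Rightarrow> 'b set set \<Rightarrow> ('a \<Rightarrow> 'b) \<Rightarrow> ('a \<Rightarrow> 'k::comm_ring_1) \<Rightarrow> ('b \<Rightarrow> 'k)" where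
  "Kphi C S T pm u = (\<lambda>h. \<Sum>\<pi>\<in>S. u (SOME f. f \<in> \<pi>) * of_nat (nphi C pm \<pi>) * sblock (img_block T pm \<pi>) h)"

end

theory Submission imports Defs begin

definition rep :: "'a set \<Rightarrow> 'a" where "rep \<sigma> = (SOME f. f \<in> \<sigma>)"
definition blk :: "'a set set \<Rightarrow> 'a \<Rightarrow> 'a set" where "blk S f = (THE \<sigma>. \<sigma> \<in> S \<and> f \<in> \<sigma>)"

definition BC :: "('o,'a) cat \<Rightarrow> 'a set set \<Rightarrow> ('a \<Rightarrow> 'k::comm_ring_1) \<Rightarrow> bool" where
  "BC C S u \<longleftrightarrow> (\<forall>h. h \<notin> Mor C \<longrightarrow> u h = 0) \<and> (\<forall>\<sigma>\<in>S. \<forall>h\<in>\<sigma>. u h = u (rep \<sigma>))"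

lemma cat_facts:
  assumes "category C"
  shows "f \<in> Mor C \<Longrightarrow> src C f \<in> Ob C" "f \<in> Mor C \<Longrightarrow> tgt C f \<in> Ob C"
    "x \<in> Ob C \<Longrightarrow> ident C x \<in> Mor C" "x \<in> Ob C \<Longrightarrow> src C (ident C x) = x"
    "x \<in> Ob C \<Longrightarrow> tgt C (ident C x) = x"
    "f \<in> Mor C \<Longrightarrow> g \<in> Mor C \<Longrightarrow> src C f = tgt C g \<Longrightarrow> comp C f g \<in> Mor C"
    "f \<in> Mor C \<Longrightarrow> g \<in> Mor C \<Longrightarrow> src C f = tgt C g \<Longrightarrow> src C (comp C f g) = src C g"
    "f \<in> Mor C \<Longrightarrow> g \<in> Mor C \<Longrightarrow> src C f = tgt C g \<Longrightarrow> tgt C (comp C f g) = tgt C f"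
    "f \<in> Mor C \<Longrightarrow> g \<in> Mor C \<Longrightarrow> h \<in> Mor C \<Longrightarrow> src C f = tgt C g \<Longrightarrow> src C g = tgt C h \<Longrightarrow>
        comp C (comp C f g) h = comp C f (comp C g h)"
    "f \<in> Mor C \<Longrightarrow> comp C (ident C (tgt C f)) f = f"
    "f \<in> Mor C \<Longrightarrow> comp C f (ident C (src C f)) = f"
  using assms unfolding category_def by blast+

lemma grp_inv:
  assumes "groupoid C" "f \<in> Mor C"
  obtains g where "g \<in> Mor C" "src C g = tgt C f" "tgt C g = src C f"
     "comp C g f = ident C (src C f)" "comp C f g = ident C (tgt C f)"
  using assms unfolding groupoid_def by blast

lemma qs_facts:
  assumes "quasi_schemoid C S"
  shows "category C" "\<sigma> \<in> S \<Longrightarrow> \<sigma> \<subseteq> Mor C" "\<sigma> \<in> S \<Longrightarrow> \<sigma> \<noteq> {}"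
    "f \<in> Mor C \<Longrightarrow> \<exists>\<sigma>\<in>S. f \<in> \<sigma>"
    "\<sigma> \<in> S \<Longrightarrow> \<tau> \<in> S \<Longrightarrow> f \<in> \<sigma> \<Longrightarrow> f \<in> \<tau> \<Longrightarrow> \<sigma> = \<tau>"
    "\<sigma> \<in> S \<Longrightarrow> \<tau> \<in> S \<Longrightarrow> \<mu> \<in> S \<Longrightarrow> f \<in> \<mu> \<Longrightarrow> g \<in> \<mu> \<Longrightarrow>
       card (factorizations C \<sigma> \<tau> f) = card (factorizations C \<sigma> \<tau> g)"
proof -
  note qq = assms[unfolded quasi_schemoid_def]
  note q = conjunct1[OF qq] conjunct1[OF conjunct2[OF qq]] conjunct1[OF conjunct2[OF conjunct2[OF qq]]]
     conjunct1[OF conjunct2[OF conjunct2[OF conjunct2[OF qq]]]] conjunct2[OF conjunct2[OF conjunct2[OF conjunct2[OF qq]]]]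
  show "category C" by (rule q(1))
  show "\<sigma> \<in> S \<Longrightarrow> \<sigma> \<subseteq> Mor C" using q(2) by blast
  show "\<sigma> \<in> S \<Longrightarrow> \<sigma> \<noteq> {}" using q(2) by blast
  show "f \<in> Mor C \<Longrightarrow> \<exists>\<sigma>\<in>S. f \<in> \<sigma>" using q(3) by blast
  show "\<sigma> \<in> S \<Longrightarrow> \<tau> \<in> S \<Longrightarrow> f \<in> \<sigma> \<Longrightarrow> f \<in> \<tau> \<Longrightarrow> \<sigma> = \<tau>" using q(4) by blast
  show "\<sigma> \<in> S \<Longrightarrow> \<tau> \<in> S \<Longrightarrow> \<mu> \<in> S \<Longrightarrow> f \<in> \<mu> \<Longrightarrow> g \<in> \<mu> \<Longrightarrow>
       card (factorizations C \<sigma> \<tau> f) = card (factorizations C \<sigma> \<tau> g)" using q(5) by blast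
qed

lemma rep_in: "\<sigma> \<noteq> {} \<Longrightarrow> rep \<sigma> \<in> \<sigma>"
  unfolding rep_def by (simp add: some_in_eq)

lemma rep_S: "quasi_schemoid C S \<Longrightarrow> \<sigma> \<in> S \<Longrightarrow> rep \<sigma> \<in> \<sigma>"
  by (rule rep_in[OF qs_facts(3)])

lemma blk_eq: assumes "quasi_schemoid C S" "\<sigma> \<in> S" "f \<in> \<sigma>" shows "blk S f = \<sigma>"
  unfolding blk_def
proof (rule the_equality)
  show "\<sigma> \<in> S \<and> f \<in> \<sigma>" using assms by simp
  fix \<tau> assume "\<tau> \<in> S \<and> f \<in> \<tau>"
  then show "\<tau> = \<sigma>" using assms qs_facts(5)[OF assms(1), of \<tau> \<sigma> f] by simp
qed

lemma blk_in: assumes "quasi_schemoid C S" "f \<in> Mor C" shows "blk S f \<in> S" "f \<in> blk S f"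
proof -
  obtain \<sigma> where "\<sigma> \<in> S" "f \<in> \<sigma>" using qs_facts(4)[OF assms] by blast
  then show "blk S f \<in> S" "f \<in> blk S f" using blk_eq[OF assms(1)] by simp_all
qed

lemma qs_finS: "quasi_schemoid C S \<Longrightarrow> finite (Mor C) \<Longrightarrow> finite S"
  by (rule finite_subset[of S "Pow (Mor C)"]) (auto dest: qs_facts(2))

lemma fact_fin: "category C \<Longrightarrow> finite (Mor C) \<Longrightarrow> \<sigma> \<subseteq> Mor C \<Longrightarrow> \<tau> \<subseteq> Mor C \<Longrightarrow> finite (factorizations C \<sigma> \<tau> f)"
  by (rule finite_subset[of _ "Mor C \<times> Mor C"]) (auto simp: factorizations_def)

lemma BC_alg:
  assumes "quasi_schemoid C S" "finite (Mor C)" "u \<in> schemoid_alg S"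
  shows "BC C S u"
proof -
  obtain c where u: "u = (\<lambda>h. \<Sum>\<sigma>\<in>S. c \<sigma> * sblock \<sigma> h)" using assms(3) unfolding schemoid_alg_def by blast
  have fS: "finite S" using qs_finS assms by blast
  have 1: "u h = c \<sigma>" if "\<sigma> \<in> S" "h \<in> \<sigma>" for \<sigma> h
  proof -
    have "u h = (\<Sum>\<tau>\<in>S. if \<tau> = \<sigma> then c \<tau> else 0)"
      unfolding u using that qs_facts(5)[OF assms(1)] by (intro sum.cong) (auto simp: sblock_def)
    then show ?thesis using fS that by simp
  qed
  have 2: "u h = 0" if "h \<notin> Mor C" for h
    unfolding u using that qs_facts(2)[OF assms(1)] by (intro sum.neutral) (auto simp: sblock_def)
  show ?thesis unfolding BC_def using 1 2 rep_S[OF assms(1)] by metis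
qed

lemma BC_mult_formula:
  assumes "quasi_schemoid C S" "finite (Mor C)" "BC C S u" "BC C S v"
  shows "cat_mult C u v h = (\<Sum>q\<in>S \<times> S. of_nat (card (factorizations C (fst q) (snd q) h)) * (u (rep (fst q)) * v (rep (snd q))))"
proof -
  have cat: "category C" using qs_facts(1)[OF assms(1)] .
  have fS: "finite S" using qs_finS assms by blast
  let ?F = "factorizations C (Mor C) (Mor C) h"
  have fF: "finite ?F" using fact_fin[OF cat assms(2)] by blast
  have "cat_mult C u v h = (\<Sum>q\<in>S \<times> S. \<Sum>p\<in>{p. p \<in> ?F \<and> (blk S (fst p), blk S (snd p)) = q}. (\<lambda>(a,b). u a * v b) p)"
    unfolding cat_mult_def
    by (rule sum.group[symmetric, OF fF]) (use fS blk_in[OF assms(1)] in \<open>auto simp: factorizations_def\<close>)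
  also have "\<dots> = (\<Sum>q\<in>S \<times> S. of_nat (card (factorizations C (fst q) (snd q) h)) * (u (rep (fst q)) * v (rep (snd q))))"
  proof (rule sum.cong[OF refl])
    fix q assume q: "q \<in> S \<times> S"
    have eq: "{p. p \<in> ?F \<and> (blk S (fst p), blk S (snd p)) = q} = factorizations C (fst q) (snd q) h"
    proof (intro set_eqI iffI)
      fix p assume "p \<in> {p. p \<in> ?F \<and> (blk S (fst p), blk S (snd p)) = q}"
      then show "p \<in> factorizations C (fst q) (snd q) h"
        using blk_in[OF assms(1), of "fst p"] blk_in[OF assms(1), of "snd p"]
        by (cases p, cases q) (auto simp: factorizations_def)
    next
      fix p assume p: "p \<in> factorizations C (fst q) (snd q) h"
      have s: "fst q \<subseteq> Mor C" "snd q \<subseteq> Mor C" using q qs_facts(2)[OF assms(1)] by (auto simp: mem_Times_iff)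
      have "blk S (fst p) = fst q" "blk S (snd p) = snd q"
        using p q blk_eq[OF assms(1)] by (cases p, auto simp: factorizations_def)+
      then show "p \<in> {p. p \<in> ?F \<and> (blk S (fst p), blk S (snd p)) = q}"
        using p s by (cases p, cases q) (auto simp: factorizations_def)
    qed
    have "(\<Sum>p\<in>factorizations C (fst q) (snd q) h. (\<lambda>(a,b). u a * v b) p)
        = (\<Sum>p\<in>factorizations C (fst q) (snd q) h. u (rep (fst q)) * v (rep (snd q)))"
      using q assms(3,4) unfolding BC_def by (intro sum.cong) (auto simp: factorizations_def)
    then show "(\<Sum>p\<in>{p. p \<in> ?F \<and> (blk S (fst p), blk S (snd p)) = q}. (\<lambda>(a,b). u a * v b) p) = of_nat (card (factorizations C (fst q) (snd q) h)) * (u (rep (fst q)) * v (rep (snd q)))"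
      unfolding eq by simp
  qed
  finally show ?thesis .
qed

lemma BC_mult:
  assumes "quasi_schemoid C S" "finite (Mor C)" "BC C S u" "BC C S v"
  shows "BC C S (cat_mult C u v)"
proof -
  have cat: "category C" using qs_facts(1)[OF assms(1)] .
  have 1: "cat_mult C u v h = 0" if "h \<notin> Mor C" for h
  proof -
    have "factorizations C (Mor C) (Mor C) h = {}"
      using that cat_facts(6)[OF cat] unfolding factorizations_def by blast
    then show ?thesis by (simp add: cat_mult_def)
  qed
  have 2: "cat_mult C u v h = cat_mult C u v (rep \<mu>)" if "\<mu> \<in> S" "h \<in> \<mu>" for \<mu> h
  proof -
    have r: "rep \<mu> \<in> \<mu>" by (rule rep_in[OF qs_facts(3)[OF assms(1) that(1)]])
    show ?thesis unfolding BC_mult_formula[OF assms]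
    proof (rule sum.cong[OF refl])
      fix q assume "q \<in> S \<times> S"
      then have "fst q \<in> S" "snd q \<in> S" by (auto simp: mem_Times_iff)
      then have "card (factorizations C (fst q) (snd q) h) = card (factorizations C (fst q) (snd q) (rep \<mu>))"
        using qs_facts(6)[OF assms(1) _ _ that(1) that(2) r] by blast
      then show "of_nat (card (factorizations C (fst q) (snd q) h)) * (u (rep (fst q)) * v (rep (snd q))) =
         of_nat (card (factorizations C (fst q) (snd q) (rep \<mu>))) * (u (rep (fst q)) * v (rep (snd q)))" by simp
    qed
  qed
  show ?thesis using 1 2 unfolding BC_def by blast
qed


locale setting =
  fixes C :: "('o, 'a) cat" and S :: "'a set set"
    and D :: "('p, 'b) cat" and T :: "'b set set"
    and po :: "'o \<Rightarrow> 'p" and pm :: "'a \<Rightarrow> 'b"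
  assumes fD: "finite_qs D T" and bD: "basic_qs D T"
    and fC: "finite_qs C S" and gC: "groupoid C"
    and adm: "admissible C S D T po pm"
begin

lemma qsC: "quasi_schemoid C S" using fC unfolding finite_qs_def by (rule conjunct1)
lemma qsD: "quasi_schemoid D T" using fD unfolding finite_qs_def by (rule conjunct1)
lemma finC: "finite (Mor C)" using fC unfolding finite_qs_def by (rule conjunct2)
lemma finD: "finite (Mor D)" using fD unfolding finite_qs_def by (rule conjunct2)
lemma catC: "category C" by (rule qs_facts(1)[OF qsC])
lemma catD: "category D" by (rule qs_facts(1)[OF qsD])
lemma gD: "groupoid D" using bD unfolding basic_qs_def by (rule conjunct2)

lemma finS: "finite S" by (rule qs_finS[OF qsC finC])
lemma finT: "finite T" by (rule qs_finS[OF qsD finD])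

lemma mor: "qs_morphism C S D T po pm" using adm unfolding admissible_def by (rule conjunct1)

lemma mfacts: "(\<forall>x\<in>Ob C. po x \<in> Ob D)"
     "(\<forall>f\<in>Mor C. pm f \<in> Mor D \<and> src D (pm f) = po (src C f) \<and> tgt D (pm f) = po (tgt C f))"
     "(\<forall>f\<in>Mor C. \<forall>g\<in>Mor C. src C f = tgt C g \<longrightarrow> pm (comp C f g) = comp D (pm f) (pm g))"
     "(\<forall>x\<in>Ob C. pm (ident C x) = ident D (po x))"
     "(\<forall>\<sigma>\<in>S. \<exists>\<tau>\<in>T. pm ` \<sigma> \<subseteq> \<tau>)"
proof -
  note m = conjunct2[OF conjunct2[OF mor[unfolded qs_morphism_def]]]
  show "(\<forall>x\<in>Ob C. po x \<in> Ob D)" using m by (rule conjunct1)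
  show "(\<forall>f\<in>Mor C. pm f \<in> Mor D \<and> src D (pm f) = po (src C f) \<and> tgt D (pm f) = po (tgt C f))"
    using conjunct2[OF m] by (rule conjunct1)
  show "(\<forall>f\<in>Mor C. \<forall>g\<in>Mor C. src C f = tgt C g \<longrightarrow> pm (comp C f g) = comp D (pm f) (pm g))"
    using conjunct2[OF conjunct2[OF m]] by (rule conjunct1)
  show "(\<forall>x\<in>Ob C. pm (ident C x) = ident D (po x))"
    using conjunct2[OF conjunct2[OF conjunct2[OF m]]] by (rule conjunct1)
  show "(\<forall>\<sigma>\<in>S. \<exists>\<tau>\<in>T. pm ` \<sigma> \<subseteq> \<tau>)"
    using conjunct2[OF conjunct2[OF conjunct2[OF m]]] by (rule conjunct2)
qed

lemma po_ob: "x \<in> Ob C \<Longrightarrow> po x \<in> Ob D" using mfacts(1) by blast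
lemma pm_mor: "f \<in> Mor C \<Longrightarrow> pm f \<in> Mor D" using mfacts(2) by blast
lemma pm_src: "f \<in> Mor C \<Longrightarrow> src D (pm f) = po (src C f)" using mfacts(2) by blast
lemma pm_tgt: "f \<in> Mor C \<Longrightarrow> tgt D (pm f) = po (tgt C f)" using mfacts(2) by blast
lemma pm_comp: "f \<in> Mor C \<Longrightarrow> g \<in> Mor C \<Longrightarrow> src C f = tgt C g \<Longrightarrow> pm (comp C f g) = comp D (pm f) (pm g)"
  using mfacts(3) by blast
lemma pm_id: "x \<in> Ob C \<Longrightarrow> pm (ident C x) = ident D (po x)" using mfacts(4) by blast
lemma pm_blk: "\<sigma> \<in> S \<Longrightarrow> \<exists>\<tau>\<in>T. pm ` \<sigma> \<subseteq> \<tau>" using mfacts(5) by blast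

lemma Im: assumes "\<sigma> \<in> S" shows "img_block T pm \<sigma> \<in> T" "pm ` \<sigma> \<subseteq> img_block T pm \<sigma>"
proof -
  obtain \<tau> where t: "\<tau> \<in> T" "pm ` \<sigma> \<subseteq> \<tau>" using pm_blk assms by blast
  have r0: "rep \<sigma> \<in> \<sigma>" by (rule rep_S[OF qsC assms])
  have r: "pm (rep \<sigma>) \<in> \<tau>" using t r0 by blast
  have uq: "\<tau>' = \<tau>" if "\<tau>' \<in> T" "pm ` \<sigma> \<subseteq> \<tau>'" for \<tau>'
  proof -
    have "pm (rep \<sigma>) \<in> \<tau>'" using that r0 by blast
    then show ?thesis using qs_facts(5)[OF qsD that(1) t(1), of "pm (rep \<sigma>)"] r by simp
  qed
  have "img_block T pm \<sigma> = \<tau>" unfolding img_block_def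
  proof (rule the_equality)
    show "\<tau> \<in> T \<and> pm ` \<sigma> \<subseteq> \<tau>" using t by simp
    fix \<tau>' assume "\<tau>' \<in> T \<and> pm ` \<sigma> \<subseteq> \<tau>'"
    then show "\<tau>' = \<tau>" using uq by simp
  qed
  then show "img_block T pm \<sigma> \<in> T" "pm ` \<sigma> \<subseteq> img_block T pm \<sigma>" using t by simp_all
qed

lemma adm2: "x \<in> Ob C \<Longrightarrow> \<sigma> \<in> S \<Longrightarrow> g \<in> img_block T pm \<sigma> \<Longrightarrow> tgt D g = po x \<Longrightarrow> \<exists>f\<in>\<sigma>. tgt C f = x \<and> pm f = g"
  using conjunct2[OF adm[unfolded admissible_def]] by blast

lemma unital: "\<tau> \<in> T \<Longrightarrow> \<tau> \<inter> ident D ` Ob D \<noteq> {} \<Longrightarrow> \<tau> \<subseteq> ident D ` Ob D"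
  using conjunct2[OF conjunct1[OF bD[unfolded basic_qs_def unital_qs_def]]] by blast

definition K where "K = {k \<in> Mor C. pm k \<in> ident D ` Ob D}"

lemma K_union: "K = \<Union>{\<rho> \<in> S. \<rho> \<subseteq> K}"
proof
  show "K \<subseteq> \<Union>{\<rho> \<in> S. \<rho> \<subseteq> K}"
  proof
    fix k assume k: "k \<in> K"
    then have km: "k \<in> Mor C" unfolding K_def by blast
    let ?\<rho> = "blk S k"
    have \<rho>: "?\<rho> \<in> S" "k \<in> ?\<rho>" using blk_in[OF qsC km] by auto
    have "pm k \<in> img_block T pm ?\<rho> \<inter> ident D ` Ob D" using Im(2)[OF \<rho>(1)] \<rho>(2) k unfolding K_def by blast
    then have "img_block T pm ?\<rho> \<subseteq> ident D ` Ob D" using unital Im(1)[OF \<rho>(1)] by blast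
    then have "?\<rho> \<subseteq> K" using Im(2)[OF \<rho>(1)] qs_facts(2)[OF qsC \<rho>(1)] unfolding K_def by blast
    then show "k \<in> \<Union>{\<rho> \<in> S. \<rho> \<subseteq> K}" using \<rho> by blast
  qed
qed blast

lemma card_K: "card (factorizations C \<pi> K f) = (\<Sum>\<rho>\<in>{\<rho> \<in> S. \<rho> \<subseteq> K}. card (factorizations C \<pi> \<rho> f))"
  if "\<pi> \<in> S"
proof -
  have e: "factorizations C \<pi> K f = (\<Union>\<rho>\<in>{\<rho> \<in> S. \<rho> \<subseteq> K}. factorizations C \<pi> \<rho> f)"
    by (subst K_union) (auto simp: factorizations_def)
  show ?thesis unfolding e
  proof (rule card_UN_disjoint)
    show "finite {\<rho> \<in> S. \<rho> \<subseteq> K}" using finS by simp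
    show "\<forall>i\<in>{\<rho> \<in> S. \<rho> \<subseteq> K}. finite (factorizations C \<pi> i f)"
      using fact_fin[OF catC finC] qs_facts(2)[OF qsC] that by blast
    show "\<forall>i\<in>{\<rho> \<in> S. \<rho> \<subseteq> K}. \<forall>j\<in>{\<rho> \<in> S. \<rho> \<subseteq> K}. i \<noteq> j \<longrightarrow> factorizations C \<pi> i f \<inter> factorizations C \<pi> j f = {}"
      using qs_facts(5)[OF qsC] by (auto simp: factorizations_def)
  qed
qed

lemma A_card:
  assumes "\<pi> \<in> S" "f \<in> \<pi>"
  shows "card {f' \<in> \<pi>. tgt C f' = tgt C f \<and> pm f' = pm f} = card (factorizations C \<pi> K f)"
proof -
  have fm: "f \<in> Mor C" using assms qs_facts(2)[OF qsC] by blast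
  have pim: "\<pi> \<subseteq> Mor C" using assms qs_facts(2)[OF qsC] by blast
  have inj: "inj_on fst (factorizations C \<pi> K f)"
  proof (rule inj_onI)
    fix p q assume p: "p \<in> factorizations C \<pi> K f" and q: "q \<in> factorizations C \<pi> K f" and e: "fst p = fst q"
    obtain a b where pab: "p = (a, b)" by (cases p)
    obtain b' where qab: "q = (a, b')" using e pab by (cases q) auto
    have a: "a \<in> Mor C" and b: "b \<in> Mor C" "b' \<in> Mor C" and c: "src C a = tgt C b" "src C a = tgt C b'"
      and cc: "comp C a b = f" "comp C a b' = f"
      using p q pim unfolding pab qab factorizations_def K_def by auto
    obtain g where g: "g \<in> Mor C" "src C g = tgt C a" "tgt C g = src C a" "comp C g a = ident C (src C a)"
      using grp_inv[OF gC a] by blast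
    have "b = comp C (comp C g a) b" using c cat_facts(10)[OF catC b(1)] g by simp
    also have "\<dots> = comp C g f" using cat_facts(9)[OF catC g(1) a b(1)] g c cc by simp
    also have "\<dots> = comp C (comp C g a) b'" using cat_facts(9)[OF catC g(1) a b(2)] g c cc by simp
    also have "\<dots> = b'" using c cat_facts(10)[OF catC b(2)] g by simp
    finally show "p = q" using pab qab by simp
  qed
  have img: "fst ` factorizations C \<pi> K f = {f' \<in> \<pi>. tgt C f' = tgt C f \<and> pm f' = pm f}"
  proof (intro set_eqI iffI)
    fix f' assume "f' \<in> fst ` factorizations C \<pi> K f"
    then obtain k where fk: "(f', k) \<in> factorizations C \<pi> K f" by force
    then have f': "f' \<in> \<pi>" "f' \<in> Mor C" and k: "k \<in> Mor C" "pm k \<in> ident D ` Ob D"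
      and c: "src C f' = tgt C k" and cf: "comp C f' k = f"
      using pim unfolding factorizations_def K_def by auto
    have t: "tgt C f = tgt C f'" using cf cat_facts(8)[OF catC f'(2) k(1) c] by simp
    obtain z where z: "z \<in> Ob D" "pm k = ident D z" using k by blast
    have "z = po (tgt C k)" using pm_tgt[OF k(1)] z cat_facts(5)[OF catD z(1)] by simp
    then have "pm k = ident D (src D (pm f'))" using z c pm_src[OF f'(2)] by simp
    then have "pm f = pm f'" using cf pm_comp[OF f'(2) k(1) c] cat_facts(11)[OF catD pm_mor[OF f'(2)]] by simp
    then show "f' \<in> {f' \<in> \<pi>. tgt C f' = tgt C f \<and> pm f' = pm f}" using f' t by simp
  next
    fix f' assume "f' \<in> {f' \<in> \<pi>. tgt C f' = tgt C f \<and> pm f' = pm f}"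
    then have f': "f' \<in> \<pi>" "f' \<in> Mor C" "tgt C f' = tgt C f" "pm f' = pm f" using pim by auto
    obtain g where g: "g \<in> Mor C" "src C g = tgt C f'" "tgt C g = src C f'"
       "comp C g f' = ident C (src C f')" "comp C f' g = ident C (tgt C f')"
      using grp_inv[OF gC f'(2)] by blast
    let ?k = "comp C g f"
    have gf: "src C g = tgt C f" using g f' by simp
    have km: "?k \<in> Mor C" using cat_facts(6)[OF catC g(1) fm gf] .
    have kt: "tgt C ?k = src C f'" using cat_facts(8)[OF catC g(1) fm gf] g by simp
    have "comp C f' ?k = comp C (comp C f' g) f" using cat_facts(9)[OF catC f'(2) g(1) fm] g gf by simp
    also have "\<dots> = f" using g f' cat_facts(10)[OF catC fm] by simp
    finally have fk: "comp C f' ?k = f" .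
    have "pm ?k = comp D (pm g) (pm f')" using pm_comp[OF g(1) fm gf] f' by simp
    also have "\<dots> = pm (comp C g f')" using pm_comp[OF g(1) f'(2)] g by simp
    also have "\<dots> = ident D (po (src C f'))" using g pm_id cat_facts(1)[OF catC f'(2)] by simp
    finally have "?k \<in> K" unfolding K_def using km po_ob cat_facts(1)[OF catC f'(2)] by blast
    then have "(f', ?k) \<in> factorizations C \<pi> K f" unfolding factorizations_def using f' kt fk by simp
    then show "f' \<in> fst ` factorizations C \<pi> K f" by force
  qed
  show ?thesis using card_image[OF inj] img by simp
qed

lemma nconst:
  assumes "\<pi> \<in> S" "x \<in> Ob C" "g \<in> img_block T pm \<pi>" "tgt D g = po x"
  shows "card {f \<in> \<pi>. tgt C f = x \<and> pm f = g} = nphi C pm \<pi>"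
proof -
  obtain f where f: "f \<in> \<pi>" "tgt C f = x" "pm f = g" using adm2 assms by blast
  have r: "rep \<pi> \<in> \<pi>" by (rule rep_S[OF qsC assms(1)])
  have "card {f' \<in> \<pi>. tgt C f' = tgt C f \<and> pm f' = pm f} = card {f' \<in> \<pi>. tgt C f' = tgt C (rep \<pi>) \<and> pm f' = pm (rep \<pi>)}"
    unfolding A_card[OF assms(1) f(1)] A_card[OF assms(1) r] card_K[OF assms(1)]
    using qs_facts(6)[OF qsC assms(1) _ assms(1) f(1) r] by (intro sum.cong) auto
  then show ?thesis using f unfolding nphi_def rep_def Let_def by simp
qed


lemma Kphi_alt: "Kphi C S T pm u h = (\<Sum>\<pi>\<in>S. u (rep \<pi>) * of_nat (nphi C pm \<pi>) * sblock (img_block T pm \<pi>) h)"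
  by (simp add: Kphi_def rep_def)

lemma fiber:
  assumes u: "BC C S u" and x: "x \<in> Ob C" and g: "tgt D g = po x"
  shows "(\<Sum>f\<in>{f\<in>Mor C. tgt C f = x \<and> pm f = g}. u f) = Kphi C S T pm u g"
proof -
  let ?M = "{f\<in>Mor C. tgt C f = x \<and> pm f = g}"
  have fM: "finite ?M" using finC by simp
  have im: "blk S ` ?M \<subseteq> S" using blk_in(1)[OF qsC] by blast
  have "(\<Sum>f\<in>?M. u f) = (\<Sum>\<pi>\<in>S. \<Sum>f\<in>{f. f\<in>?M \<and> blk S f = \<pi>}. u f)"
    by (rule sum.group[symmetric, OF fM finS im])
  also have "\<dots> = Kphi C S T pm u g" unfolding Kphi_alt
  proof (rule sum.cong[OF refl])
    fix \<pi> assume \<pi>: "\<pi> \<in> S"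
    have e: "{f. f\<in>?M \<and> blk S f = \<pi>} = {f\<in>\<pi>. tgt C f = x \<and> pm f = g}"
    proof (intro set_eqI iffI)
      fix f assume "f \<in> {f. f\<in>?M \<and> blk S f = \<pi>}"
      then show "f \<in> {f\<in>\<pi>. tgt C f = x \<and> pm f = g}" using blk_in(2)[OF qsC, of f] by auto
    next
      fix f assume f: "f \<in> {f\<in>\<pi>. tgt C f = x \<and> pm f = g}"
      then have "f \<in> Mor C" using qs_facts(2)[OF qsC \<pi>] by blast
      moreover have "blk S f = \<pi>" using blk_eq[OF qsC \<pi>] f by simp
      ultimately show "f \<in> {f. f\<in>?M \<and> blk S f = \<pi>}" using f by simp
    qed
    have "(\<Sum>f\<in>{f\<in>\<pi>. tgt C f = x \<and> pm f = g}. u f) = (\<Sum>f\<in>{f\<in>\<pi>. tgt C f = x \<and> pm f = g}. u (rep \<pi>))"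
      using conjunct2[OF u[unfolded BC_def]] \<pi> by (intro sum.cong) auto
    then have s: "(\<Sum>f\<in>{f. f\<in>?M \<and> blk S f = \<pi>}. u f) = of_nat (card {f\<in>\<pi>. tgt C f = x \<and> pm f = g}) * u (rep \<pi>)"
      unfolding e by simp
    show "(\<Sum>f\<in>{f. f\<in>?M \<and> blk S f = \<pi>}. u f) = u (rep \<pi>) * of_nat (nphi C pm \<pi>) * sblock (img_block T pm \<pi>) g"
    proof (cases "g \<in> img_block T pm \<pi>")
      case True
      then show ?thesis unfolding s nconst[OF \<pi> x True g] by (simp add: sblock_def)
    next
      case False
      have E: "{f\<in>\<pi>. tgt C f = x \<and> pm f = g} = {}" using Im(2)[OF \<pi>] False by blast
      show ?thesis unfolding s E using False by (simp add: sblock_def)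
    qed
  qed
  finally show ?thesis .
qed

lemma BC_Kphi: "BC D T (Kphi C S T pm u)"
proof -
  have 1: "Kphi C S T pm u h = 0" if "h \<notin> Mor D" for h
    unfolding Kphi_alt
  proof (rule sum.neutral, rule ballI)
    fix \<pi> assume \<pi>: "\<pi> \<in> S"
    have "h \<notin> img_block T pm \<pi>" using qs_facts(2)[OF qsD Im(1)[OF \<pi>]] that by blast
    then show "u (rep \<pi>) * of_nat (nphi C pm \<pi>) * sblock (img_block T pm \<pi>) h = 0" by (simp add: sblock_def)
  qed
  have 2: "Kphi C S T pm u h = Kphi C S T pm u (rep \<nu>)" if \<nu>: "\<nu> \<in> T" "h \<in> \<nu>" for \<nu> h
    unfolding Kphi_alt
  proof (rule sum.cong[OF refl])
    fix \<pi> assume \<pi>: "\<pi> \<in> S"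
    have r: "rep \<nu> \<in> \<nu>" by (rule rep_S[OF qsD \<nu>(1)])
    have "h' \<in> img_block T pm \<pi> \<longleftrightarrow> img_block T pm \<pi> = \<nu>" if "h' \<in> \<nu>" for h'
      using qs_facts(5)[OF qsD Im(1)[OF \<pi>] \<nu>(1) _ that] that by blast
    then have "sblock (img_block T pm \<pi>) h = (sblock (img_block T pm \<pi>) (rep \<nu>) :: 'c::comm_ring_1)"
      using r \<nu>(2) unfolding sblock_def by simp
    then show "u (rep \<pi>) * of_nat (nphi C pm \<pi>) * sblock (img_block T pm \<pi>) h =
      u (rep \<pi>) * of_nat (nphi C pm \<pi>) * sblock (img_block T pm \<pi>) (rep \<nu>)" by simp
  qed
  show ?thesis unfolding BC_def using 1 2 by blast
qed

lemma local_eq: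
  assumes u: "BC C S u" and v: "BC C S v" and x: "x \<in> Ob C" and g: "tgt D g = po x"
  shows "Kphi C S T pm (cat_mult C u v) g = cat_mult D (Kphi C S T pm u) (Kphi C S T pm v) g"
proof -
  let ?P = "{(a,b). a \<in> Mor C \<and> b \<in> Mor C \<and> src C a = tgt C b \<and> tgt C a = x \<and> pm (comp C a b) = g}"
  have fP: "finite ?P" by (rule finite_subset[of _ "Mor C \<times> Mor C"]) (auto simp: finC)
  let ?H = "{h\<in>Mor C. tgt C h = x \<and> pm h = g}"
  have fH: "finite ?H" using finC by simp
  have w: "BC C S (cat_mult C u v)" by (rule BC_mult[OF qsC finC u v])
  have imH: "(\<lambda>(a,b). comp C a b) ` ?P \<subseteq> ?H"
    using cat_facts(6,8)[OF catC] by auto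
  have "(\<Sum>(a,b)\<in>?P. u a * v b) = (\<Sum>h\<in>?H. \<Sum>p\<in>{p. p\<in>?P \<and> (\<lambda>(a,b). comp C a b) p = h}. (\<lambda>(a,b). u a * v b) p)"
    by (rule sum.group[symmetric, OF fP fH imH])
  also have "\<dots> = (\<Sum>h\<in>?H. cat_mult C u v h)"
  proof (rule sum.cong[OF refl])
    fix h assume h: "h \<in> ?H"
    have "{p. p\<in>?P \<and> (\<lambda>(a,b). comp C a b) p = h} = factorizations C (Mor C) (Mor C) h"
    proof (intro set_eqI iffI)
      fix p assume "p \<in> {p. p\<in>?P \<and> (\<lambda>(a,b). comp C a b) p = h}"
      then show "p \<in> factorizations C (Mor C) (Mor C) h" by (auto simp: factorizations_def)
    next
      fix p assume p: "p \<in> factorizations C (Mor C) (Mor C) h"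
      obtain a b where ab: "p = (a,b)" by (cases p)
      have a: "a \<in> Mor C" "b \<in> Mor C" "src C a = tgt C b" "comp C a b = h" using p ab by (auto simp: factorizations_def)
      have "tgt C a = x" using cat_facts(8)[OF catC a(1,2,3)] a(4) h by simp
      then show "p \<in> {p. p\<in>?P \<and> (\<lambda>(a,b). comp C a b) p = h}" using a h ab by simp
    qed
    then show "(\<Sum>p\<in>{p. p\<in>?P \<and> (\<lambda>(a,b). comp C a b) p = h}. (\<lambda>(a,b). u a * v b) p) = cat_mult C u v h"
      by (simp add: cat_mult_def)
  qed
  also have "\<dots> = Kphi C S T pm (cat_mult C u v) g" by (rule fiber[OF w x g])
  finally have L: "(\<Sum>(a,b)\<in>?P. u a * v b) = Kphi C S T pm (cat_mult C u v) g" .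

  let ?Q = "factorizations D (Mor D) (Mor D) g"
  have fQ: "finite ?Q" by (rule fact_fin[OF catD finD]) auto
  have imQ: "(\<lambda>(a,b). (pm a, pm b)) ` ?P \<subseteq> ?Q"
  proof
    fix q assume "q \<in> (\<lambda>(a,b). (pm a, pm b)) ` ?P"
    then obtain a b where ab: "(a,b) \<in> ?P" "q = (pm a, pm b)" by auto
    then have a: "a \<in> Mor C" "b \<in> Mor C" "src C a = tgt C b" "pm (comp C a b) = g" by auto
    show "q \<in> ?Q" unfolding factorizations_def using ab(2) a pm_mor pm_src pm_tgt pm_comp[OF a(1,2,3)] by simp
  qed
  have "(\<Sum>(a,b)\<in>?P. u a * v b) = (\<Sum>q\<in>?Q. \<Sum>p\<in>{p. p\<in>?P \<and> (\<lambda>(a,b). (pm a, pm b)) p = q}. (\<lambda>(a,b). u a * v b) p)"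
    by (rule sum.group[symmetric, OF fP fQ imQ])
  also have "\<dots> = (\<Sum>q\<in>?Q. (\<lambda>(a',b'). Kphi C S T pm u a' * Kphi C S T pm v b') q)"
  proof (rule sum.cong[OF refl])
    fix q assume q: "q \<in> ?Q"
    obtain a' b' where qq: "q = (a',b')" by (cases q)
    have ab': "a' \<in> Mor D" "b' \<in> Mor D" "src D a' = tgt D b'" "comp D a' b' = g"
      using q qq by (auto simp: factorizations_def)
    have ta': "tgt D a' = po x" using cat_facts(8)[OF catD ab'(1,2,3)] ab'(4) g by simp
    let ?A = "{a\<in>Mor C. tgt C a = x \<and> pm a = a'}"
    let ?B = "\<lambda>a. {b\<in>Mor C. tgt C b = src C a \<and> pm b = b'}"
    have e: "{p. p\<in>?P \<and> (\<lambda>(a,b). (pm a, pm b)) p = q} = Sigma ?A ?B"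
    proof (intro set_eqI iffI)
      fix p assume "p \<in> {p. p\<in>?P \<and> (\<lambda>(a,b). (pm a, pm b)) p = q}"
      then show "p \<in> Sigma ?A ?B" using qq by auto
    next
      fix p assume p: "p \<in> Sigma ?A ?B"
      obtain a b where ab: "p = (a,b)" by (cases p)
      have a: "a \<in> Mor C" "b \<in> Mor C" "src C a = tgt C b" "tgt C a = x" "pm a = a'" "pm b = b'"
        using p ab by auto
      have "pm (comp C a b) = g" using pm_comp[OF a(1,2,3)] a ab'(4) by simp
      then show "p \<in> {p. p\<in>?P \<and> (\<lambda>(a,b). (pm a, pm b)) p = q}" using a ab qq by simp
    qed
    have "(\<Sum>p\<in>Sigma ?A ?B. (\<lambda>(a,b). u a * v b) p) = (\<Sum>a\<in>?A. \<Sum>b\<in>?B a. u a * v b)"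
      by (rule sum.Sigma[symmetric]) (auto simp: finC)
    also have "\<dots> = (\<Sum>a\<in>?A. u a * Kphi C S T pm v b')"
    proof (rule sum.cong[OF refl])
      fix a assume a: "a \<in> ?A"
      have sa: "src C a \<in> Ob C" using cat_facts(1)[OF catC] a by blast
      have tb: "tgt D b' = po (src C a)" using ab'(3) pm_src a by auto
      show "(\<Sum>b\<in>?B a. u a * v b) = u a * Kphi C S T pm v b'"
        unfolding sum_distrib_left[symmetric] fiber[OF v sa tb] ..
    qed
    also have "\<dots> = (\<Sum>a\<in>?A. u a) * Kphi C S T pm v b'" by (simp add: sum_distrib_right)
    also have "\<dots> = Kphi C S T pm u a' * Kphi C S T pm v b'" using fiber[OF u x ta'] by simp
    finally show "(\<Sum>p\<in>{p. p\<in>?P \<and> (\<lambda>(a,b). (pm a, pm b)) p = q}. (\<lambda>(a,b). u a * v b) p) =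
        (\<lambda>(a',b'). Kphi C S T pm u a' * Kphi C S T pm v b') q" using e qq by simp
  qed
  also have "\<dots> = cat_mult D (Kphi C S T pm u) (Kphi C S T pm v) g" by (simp add: cat_mult_def)
  finally show ?thesis using L by simp
qed


lemma no_tgt:
  assumes \<nu>: "\<nu> \<in> T" "g \<in> \<nu>" and q: "(a', b') \<in> factorizations D (Mor D) (Mor D) g"
    and \<pi>: "\<pi> \<in> S" "a' \<in> img_block T pm \<pi>"
  shows "\<exists>g'\<in>\<nu>. \<exists>x\<in>Ob C. tgt D g' = po x"
proof -
  have ab': "a' \<in> Mor D" "b' \<in> Mor D" "src D a' = tgt D b'" "comp D a' b' = g"
    using q by (auto simp: factorizations_def)
  obtain r where r: "r \<in> Mor D" "src D r = tgt D b'" "tgt D r = src D b'"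
     "comp D r b' = ident D (src D b')" "comp D b' r = ident D (tgt D b')"
    using grp_inv[OF gD ab'(2)] by blast
  have "comp D g r = comp D (comp D a' b') r" using ab' by simp
  also have "\<dots> = comp D a' (comp D b' r)" using cat_facts(9)[OF catD ab'(1,2) r(1) ab'(3)] r(3) by simp
  also have "\<dots> = a'" using r(5) ab'(3) cat_facts(11)[OF catD ab'(1)] by simp
  finally have gr: "comp D g r = a'" .
  have sg: "src D g = tgt D r" using cat_facts(7)[OF catD ab'(1,2,3)] ab'(4) r(3) by simp
  let ?\<rho> = "blk T r"
  have \<rho>: "?\<rho> \<in> T" "r \<in> ?\<rho>" using blk_in[OF qsD r(1)] by auto
  have fin: "finite (factorizations D \<nu> ?\<rho> h)" for h
    by (rule fact_fin[OF catD finD qs_facts(2)[OF qsD \<nu>(1)] qs_facts(2)[OF qsD \<rho>(1)]])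
  have "(g, r) \<in> factorizations D \<nu> ?\<rho> a'" unfolding factorizations_def using \<nu> \<rho> sg gr by simp
  then have c: "card (factorizations D \<nu> ?\<rho> a') \<noteq> 0" using fin[of a'] by auto
  have r0: "rep \<pi> \<in> \<pi>" by (rule rep_S[OF qsC \<pi>(1)])
  have h: "pm (rep \<pi>) \<in> img_block T pm \<pi>" using Im(2)[OF \<pi>(1)] r0 by blast
  have "card (factorizations D \<nu> ?\<rho> (pm (rep \<pi>))) = card (factorizations D \<nu> ?\<rho> a')"
    by (rule qs_facts(6)[OF qsD \<nu>(1) \<rho>(1) Im(1)[OF \<pi>(1)] h \<pi>(2)])
  with c have "factorizations D \<nu> ?\<rho> (pm (rep \<pi>)) \<noteq> {}" by auto
  then obtain g'' r' where gr': "(g'', r') \<in> factorizations D \<nu> ?\<rho> (pm (rep \<pi>))" by auto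
  then have g'': "g'' \<in> \<nu>" "r' \<in> ?\<rho>" "src D g'' = tgt D r'" "comp D g'' r' = pm (rep \<pi>)"
    by (auto simp: factorizations_def)
  have gm: "g'' \<in> Mor D" "r' \<in> Mor D" using g'' qs_facts(2)[OF qsD \<nu>(1)] qs_facts(2)[OF qsD \<rho>(1)] by blast+
  have rm: "rep \<pi> \<in> Mor C" using r0 qs_facts(2)[OF qsC \<pi>(1)] by blast
  have "tgt D g'' = po (tgt C (rep \<pi>))"
    using cat_facts(8)[OF catD gm g''(3)] g''(4) pm_tgt[OF rm] by simp
  moreover have "tgt C (rep \<pi>) \<in> Ob C" by (rule cat_facts(2)[OF catC rm])
  ultimately show ?thesis using g''(1) by blast
qed

lemma main:
  assumes "u \<in> schemoid_alg S" "v \<in> schemoid_alg S"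
  shows "Kphi C S T pm (cat_mult C u v) = cat_mult D (Kphi C S T pm u) (Kphi C S T pm v)"
proof (rule ext)
  fix g
  have u: "BC C S u" by (rule BC_alg[OF qsC finC assms(1)])
  have v: "BC C S v" by (rule BC_alg[OF qsC finC assms(2)])
  let ?L = "Kphi C S T pm (cat_mult C u v)"
  let ?R = "cat_mult D (Kphi C S T pm u) (Kphi C S T pm v)"
  have BL: "BC D T ?L" by (rule BC_Kphi)
  have BR: "BC D T ?R" by (rule BC_mult[OF qsD finD BC_Kphi BC_Kphi])
  note BL1 = conjunct1[OF BL[unfolded BC_def]] and BL2 = conjunct2[OF BL[unfolded BC_def]]
  note BR1 = conjunct1[OF BR[unfolded BC_def]] and BR2 = conjunct2[OF BR[unfolded BC_def]]
  show "?L g = ?R g"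
  proof (cases "g \<in> Mor D")
    case False
    then show ?thesis using BL1 BR1 by simp
  next
    case True
    let ?\<nu> = "blk T g"
    have \<nu>: "?\<nu> \<in> T" "g \<in> ?\<nu>" using blk_in[OF qsD True] by auto
    show ?thesis
    proof (cases "\<exists>g'\<in>?\<nu>. \<exists>x\<in>Ob C. tgt D g' = po x")
      case True
      then obtain g' x where g': "g' \<in> ?\<nu>" "x \<in> Ob C" "tgt D g' = po x" by blast
      have "?L g = ?L (rep ?\<nu>)" "?L g' = ?L (rep ?\<nu>)" "?R g = ?R (rep ?\<nu>)" "?R g' = ?R (rep ?\<nu>)"
        using BL2 BR2 \<nu>(1) \<nu>(2) g'(1) by simp_all
      moreover have "?L g' = ?R g'" by (rule local_eq[OF u v g'(2,3)])
      ultimately show ?thesis by simp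
    next
      case False
      have L0: "?L g = 0" unfolding Kphi_alt
      proof (rule sum.neutral, rule ballI)
        fix \<pi> assume \<pi>: "\<pi> \<in> S"
        have "g \<notin> img_block T pm \<pi>"
        proof
          assume gi: "g \<in> img_block T pm \<pi>"
          have e: "img_block T pm \<pi> = ?\<nu>" by (rule qs_facts(5)[OF qsD Im(1)[OF \<pi>] \<nu>(1) gi \<nu>(2)])
          have r0: "rep \<pi> \<in> \<pi>" by (rule rep_S[OF qsC \<pi>])
          have rm: "rep \<pi> \<in> Mor C" using r0 qs_facts(2)[OF qsC \<pi>] by blast
          have "pm (rep \<pi>) \<in> ?\<nu>" using Im(2)[OF \<pi>] r0 e by blast
          moreover have "tgt D (pm (rep \<pi>)) = po (tgt C (rep \<pi>))" by (rule pm_tgt[OF rm])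
          moreover have "tgt C (rep \<pi>) \<in> Ob C" by (rule cat_facts(2)[OF catC rm])
          ultimately show False using False by blast
        qed
        then show "cat_mult C u v (rep \<pi>) * of_nat (nphi C pm \<pi>) * sblock (img_block T pm \<pi>) g = 0"
          by (simp add: sblock_def)
      qed
      have K0: "Kphi C S T pm u a' = 0" if q: "(a', b') \<in> factorizations D (Mor D) (Mor D) g" for a' b'
        unfolding Kphi_alt
      proof (rule sum.neutral, rule ballI)
        fix \<pi> assume \<pi>: "\<pi> \<in> S"
        have "a' \<notin> img_block T pm \<pi>" using no_tgt[OF \<nu> q \<pi>] False by blast
        then show "u (rep \<pi>) * of_nat (nphi C pm \<pi>) * sblock (img_block T pm \<pi>) a' = 0"
          by (simp add: sblock_def)
      qed
      have R0: "?R g = 0" unfolding cat_mult_def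
        by (rule sum.neutral) (auto dest: K0)
      show ?thesis using L0 R0 by simp
    qed
  qed
qed

end

theorem proposition6p7:
  fixes C :: "('o, 'a) cat" and S :: "'a set set"
    and D :: "('p, 'b) cat" and T :: "'b set set"
    and po :: "'o \<Rightarrow> 'p" and pm :: "'a \<Rightarrow> 'b"
  assumes "finite_qs D T" and "basic_qs D T"
    and "finite_qs C S" and "groupoid C"
    and "admissible C S D T po pm"
  shows "\<forall>u\<in>(schemoid_alg S :: ('a \<Rightarrow> 'k::comm_ring_1) set). \<forall>v\<in>schemoid_alg S.
           Kphi C S T pm (cat_mult C u v) = cat_mult D (Kphi C S T pm u) (Kphi C S T pm v)"
proof -
  interpret setting C S D T po pm using assms by (unfold_locales)
  show ?thesis using main by blast
qed

end
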